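(* Fix $1\le k\le K$. Then: (a) $f\mapsto\pi_k(f):C(X)\to\Gamma(\mathscr M_k)$ is a $*$-homomorphism; (b) $\xi\mapsto\tau_k(\xi):\mathcal E_Y\to\Gamma(\mathscr M_k)$ is linear; (c) $\pi_k(\langle\xi,\eta\rangle_{\mathcal E})=\tau_k(\xi)^*\tau_k(\eta)$ for all $\xi,\eta\in\mathcal E_Y$; (d) $\tau_k(f\cdot\xi)=\pi_k(f)\tau_k(\xi)=\tau_k(\xi)\pi_k(f\circ\alpha)$ for all $f\in C(X)$, $\xi\in\mathcal E_Y$; (e) $\pi_k({}_{\mathcal E_Y}\langle\xi,\eta\rangle)=\tau_k(\xi)\tau_k(\eta)^*$ for all $\xi,\eta\in\mathcal E_Y$, where ${}_{\mathcal E_Y}\langle\xi,\eta\rangle=\langle\eta,\xi\rangle_{\mathcal E}\circ\alpha^{-1}$.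
   Context: Let $X$ be an infinite compact metric space, $\alpha:X\to X$ a minimal homeomorphism, $\mathscr V$ a Hermitian complex line bundle over $X$, and $Y\subset X$ closed with non-empty interior. $\mathcal E=\Gamma(\mathscr V,\alpha)$ is the Hilbert $C(X)$-bimodule of continuous sections of $\mathscr V$ with right action $(\xi f)(x)=\xi(x)f(x)$, right inner product $\langle\xi,\eta\rangle_{\mathcal E}(x)=\langle\xi(x),\eta(x)\rangle_{\mathscr V_x}$, left action $f\cdot\xi=\xi\,(f\circ\alpha)$ and left inner product $\langle\eta,\xi\rangle_{\mathcal E}\circ\alpha^{-1}$. $\mathcal E_Y=C_0(X\setminus Y)\mathcal E$. For $y\in Y$ let $r_Y(y)=\min\{n\ge1:\alpha^n(y)\in Y\}$, with distinct values $r_1<\dots<r_K$, and $Y_k=\{y\in Y:r_Y(y)=r_k\}$. Let $\mathscr V^{(0)}=X\times\mathbb C$, $\mathscr V^{(n)}=(\alpha^{n-1})^*\mathscr V\otimes\cdots\otimes\alpha^*\mathscr V\otimes\mathscr V$ (fibre $\mathscr V_{\alpha^{n-1}(x)}\otimes\cdots\otimes\mathscr V_x$, with the hermitian structure induced from $\mathscr V$), $\mathscr D^{(n)}=\mathscr V^{(0)}\oplus\cdots\oplus\mathscr V^{(n-1)}$ (orthogonal direct sum), $\mathscr M_k=\mathrm{End}(\mathscr D^{(r_k)})|_{\overline{Y_k}}$ and $\Gamma(\mathscr M_k)$ the C*-algebra of its continuous sections with pointwise composition and fibrewise adjoint. For $x\in\overline{Y_k}$, $(a_0,\dots,a_{r_k-1})\in\mathscr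 D^{(r_k)}_x$, $f\in C(X)$, $\xi\in\mathcal E_Y$: $\pi_k(f)(x)(a_0,\dots,a_{r_k-1})=(f(x)a_0,\dots,f(\alpha^{r_k-1}(x))a_{r_k-1})$ and $\tau_k(\xi)(x)(a_0,\dots,a_{r_k-1})=(0,\xi(x)\otimes a_0,\dots,\xi(\alpha^{r_k-2}(x))\otimes a_{r_k-2})$, with $\mathscr V_{\alpha^i(x)}\otimes\mathscr V^{(i)}_x=\mathscr V^{(i+1)}_x$ (and $\xi(x)\otimes a_0=\xi(x)a_0$). *)

theory Defs
  imports "HOL-Analysis.Analysis"
begin

definition minimal_map :: "('x::topological_space \<Rightarrow> 'x) \<Rightarrow> bool" where
  "minimal_map \<alpha> \<longleftrightarrow> (\<forall>A. closed A \<and> \<alpha> ` A = A \<longrightarrow> A = {} \<or> A = UNIV)"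

definition first_return :: "('x \<Rightarrow> 'x) \<Rightarrow> 'x set \<Rightarrow> 'x \<Rightarrow> nat" where
  "first_return \<alpha> Y y = (LEAST n. 1 \<le> n \<and> (\<alpha> ^^ n) y \<in> Y)"

definition ret_values :: "('x \<Rightarrow> 'x) \<Rightarrow> 'x set \<Rightarrow> nat set" where
  "ret_values \<alpha> Y = first_return \<alpha> Y ` Y"

text \<open>K = number of distinct return times, r k = k-th smallest (k = 1..K)\<close>
definition num_ret :: "('x \<Rightarrow> 'x) \<Rightarrow> 'x set \<Rightarrow> nat" where
  "num_ret \<alpha> Y = card (ret_values \<alpha> Y)"

definition ret_time :: "('x \<Rightarrow> 'x) \<Rightarrow> 'x set \<Rightarrow> nat \<Rightarrow> nat" where
  "ret_time \<alpha> Y k = sorted_list_of_set (ret_values \<alpha> Y) ! (k - 1)"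

definition ret_piece :: "('x \<Rightarrow> 'x) \<Rightarrow> 'x set \<Rightarrow> nat \<Rightarrow> 'x set" where
  "ret_piece \<alpha> Y k = {y \<in> Y. first_return \<alpha> Y y = ret_time \<alpha> Y k}"

section \<open>Hermitian line bundles, realised inside a trivial bundle X \<times> C^N\<close>

text \<open>Vectors of C^N are functions 'n \<Rightarrow> complex ('n finite), with standard
  Hermitian inner product (conjugate-linear in the first variable).\<close>

definition vscale :: "complex \<Rightarrow> ('n \<Rightarrow> complex) \<Rightarrow> ('n \<Rightarrow> complex)" where
  "vscale c v = (\<lambda>j. c * v j)"

definition vinner :: "('n::finite \<Rightarrow> complex) \<Rightarrow> ('n \<Rightarrow> complex) \<Rightarrow> complex" where
  "vinner u w = (\<Sum>j\<in>UNIV. cnj (u j) * w j)"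

text \<open>A Hermitian line bundle: a continuously varying (locally trivial) family of
  complex lines L x in C^N, with the Hermitian structure inherited from C^N.\<close>
definition line_bundle :: "('x::topological_space \<Rightarrow> ('n::finite \<Rightarrow> complex) set) \<Rightarrow> bool" where
  "line_bundle L \<longleftrightarrow>
     (\<forall>x. \<exists>v. (\<exists>j. v j \<noteq> 0) \<and> L x = {vscale c v | c. True}) \<and>
     (\<forall>x. \<exists>U s. open U \<and> x \<in> U \<and> continuous_on U s \<and> (\<forall>y\<in>U. (\<exists>j. s y j \<noteq> 0) \<and> s y \<in> L y))"

text \<open>Tensors of rank i: functions on lists of indices (supported on length i).\<close>
type_synonym 'n tensor = "'n list \<Rightarrow> complex"

definition etensor :: "('n \<Rightarrow> complex) \<Rightarrow> 'n tensor \<Rightarrow> 'n tensor" where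
  "etensor v a = (\<lambda>l. case l of [] \<Rightarrow> 0 | j # l' \<Rightarrow> v j * a l')"

definition tinner :: "nat \<Rightarrow> ('n::finite) tensor \<Rightarrow> 'n tensor \<Rightarrow> complex" where
  "tinner i a b = (\<Sum>l\<in>{l::'n list. length l = i}. cnj (a l) * b l)"

text \<open>Fibre of V^(i) at x: V_{alpha^(i-1) x} \<otimes> ... \<otimes> V_x\<close>
primrec Vfib :: "('x \<Rightarrow> ('n \<Rightarrow> complex) set) \<Rightarrow> ('x \<Rightarrow> 'x) \<Rightarrow> nat \<Rightarrow> 'x \<Rightarrow> 'n tensor set" where
  "Vfib L \<alpha> 0 x = {(\<lambda>l. if l = [] then c else 0) | c. True}"
| "Vfib L \<alpha> (Suc i) x = {etensor v a | v a. v \<in> L ((\<alpha> ^^ i) x) \<and> a \<in> Vfib L \<alpha> i x}"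

text \<open>Elements of D^(r)_x = V^(0)_x \<oplus> ... \<oplus> V^(r-1)_x\<close>
type_synonym 'n dvec = "nat \<Rightarrow> 'n tensor"

definition Dfib :: "('x \<Rightarrow> ('n \<Rightarrow> complex) set) \<Rightarrow> ('x \<Rightarrow> 'x) \<Rightarrow> nat \<Rightarrow> 'x \<Rightarrow> 'n dvec set" where
  "Dfib L \<alpha> r x = {a. (\<forall>i<r. a i \<in> Vfib L \<alpha> i x) \<and> (\<forall>i\<ge>r. a i = (\<lambda>l. 0))}"

definition Dinner :: "nat \<Rightarrow> ('n::finite) dvec \<Rightarrow> 'n dvec \<Rightarrow> complex" where
  "Dinner r a b = (\<Sum>i<r. tinner i (a i) (b i))"

definition dscale :: "complex \<Rightarrow> 'n dvec \<Rightarrow> 'n dvec" where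
  "dscale c a = (\<lambda>i l. c * a i l)"

definition dadd :: "'n dvec \<Rightarrow> 'n dvec \<Rightarrow> 'n dvec" where
  "dadd a b = (\<lambda>i l. a i l + b i l)"

definition is_end_section ::
  "'x::topological_space set \<Rightarrow> ('x \<Rightarrow> 'n dvec set) \<Rightarrow> ('x \<Rightarrow> 'n dvec \<Rightarrow> 'n dvec) \<Rightarrow> bool" where
  "is_end_section Z D S \<longleftrightarrow>
     (\<forall>x\<in>Z. \<forall>a\<in>D x. S x a \<in> D x) \<and>
     (\<forall>x\<in>Z. \<forall>a\<in>D x. \<forall>b\<in>D x. \<forall>c. S x (dadd (dscale c a) b) = dadd (dscale c (S x a)) (S x b)) \<and>
     (\<forall>a. continuous_on Z a \<and> (\<forall>x\<in>Z. a x \<in> D x) \<longrightarrow> continuous_on Z (\<lambda>x. S x (a x)))"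

definition sect_eq ::
  "'x set \<Rightarrow> ('x \<Rightarrow> 'n dvec set) \<Rightarrow> ('x \<Rightarrow> 'n dvec \<Rightarrow> 'n dvec) \<Rightarrow> ('x \<Rightarrow> 'n dvec \<Rightarrow> 'n dvec) \<Rightarrow> bool" where
  "sect_eq Z D S T \<longleftrightarrow> (\<forall>x\<in>Z. \<forall>a\<in>D x. S x a = T x a)"

definition scomp :: "('x \<Rightarrow> 'n dvec \<Rightarrow> 'n dvec) \<Rightarrow> ('x \<Rightarrow> 'n dvec \<Rightarrow> 'n dvec) \<Rightarrow> ('x \<Rightarrow> 'n dvec \<Rightarrow> 'n dvec)" where
  "scomp S T = (\<lambda>x a. S x (T x a))"

definition sadd :: "('x \<Rightarrow> 'n dvec \<Rightarrow> 'n dvec) \<Rightarrow> ('x \<Rightarrow> 'n dvec \<Rightarrow> 'n dvec) \<Rightarrow> ('x \<Rightarrow> 'n dvec \<Rightarrow> 'n dvec)" where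
  "sadd S T = (\<lambda>x a. dadd (S x a) (T x a))"

definition sscale :: "complex \<Rightarrow> ('x \<Rightarrow> 'n dvec \<Rightarrow> 'n dvec) \<Rightarrow> ('x \<Rightarrow> 'n dvec \<Rightarrow> 'n dvec)" where
  "sscale c S = (\<lambda>x a. dscale c (S x a))"

definition op_adj :: "'v set \<Rightarrow> ('v \<Rightarrow> 'v \<Rightarrow> complex) \<Rightarrow> ('v \<Rightarrow> 'v) \<Rightarrow> 'v \<Rightarrow> 'v" where
  "op_adj D ip T a = (THE c. c \<in> D \<and> (\<forall>b\<in>D. ip c b = ip a (T b)))"

definition sadj :: "nat \<Rightarrow> ('x \<Rightarrow> ('n::finite) dvec set) \<Rightarrow> ('x \<Rightarrow> 'n dvec \<Rightarrow> 'n dvec) \<Rightarrow> ('x \<Rightarrow> 'n dvec \<Rightarrow> 'n dvec)" where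
  "sadj r D S = (\<lambda>x. op_adj (D x) (Dinner r) (S x))"

definition Esec :: "('x::topological_space \<Rightarrow> ('n::finite \<Rightarrow> complex) set) \<Rightarrow> ('x \<Rightarrow> 'n \<Rightarrow> complex) set" where
  "Esec L = {\<xi>. continuous_on UNIV \<xi> \<and> (\<forall>x. \<xi> x \<in> L x)}"

definition lact :: "('x \<Rightarrow> 'x) \<Rightarrow> ('x \<Rightarrow> complex) \<Rightarrow> ('x \<Rightarrow> 'n \<Rightarrow> complex) \<Rightarrow> ('x \<Rightarrow> 'n \<Rightarrow> complex)" where
  "lact \<alpha> f \<xi> = (\<lambda>x. vscale (f (\<alpha> x)) (\<xi> x))"

definition rinner :: "('x \<Rightarrow> ('n::finite) \<Rightarrow> complex) \<Rightarrow> ('x \<Rightarrow> 'n \<Rightarrow> complex) \<Rightarrow> 'x \<Rightarrow> complex" where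
  "rinner \<xi> \<eta> = (\<lambda>x. vinner (\<xi> x) (\<eta> x))"

definition linner :: "('x \<Rightarrow> 'x) \<Rightarrow> ('x \<Rightarrow> ('n::finite) \<Rightarrow> complex) \<Rightarrow> ('x \<Rightarrow> 'n \<Rightarrow> complex) \<Rightarrow> 'x \<Rightarrow> complex" where
  "linner \<alpha> \<xi> \<eta> = (\<lambda>x. rinner \<eta> \<xi> (inv \<alpha> x))"

definition C0_compl :: "'x::topological_space set \<Rightarrow> ('x \<Rightarrow> complex) set" where
  "C0_compl Y = {f. continuous_on UNIV f \<and> (\<forall>y\<in>Y. f y = 0)}"

text \<open>E_Y = C_0(X \ Y) E\<close>
definition EY :: "('x::topological_space \<Rightarrow> ('n::finite \<Rightarrow> complex) set) \<Rightarrow> ('x \<Rightarrow> 'x) \<Rightarrow> 'x set \<Rightarrow> ('x \<Rightarrow> 'n \<Rightarrow> complex) set" where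
  "EY L \<alpha> Y = {lact \<alpha> f \<xi> | f \<xi>. f \<in> C0_compl Y \<and> \<xi> \<in> Esec L}"

definition pi_r :: "('x \<Rightarrow> 'x) \<Rightarrow> ('x \<Rightarrow> complex) \<Rightarrow> 'x \<Rightarrow> 'n dvec \<Rightarrow> 'n dvec" where
  "pi_r \<alpha> f = (\<lambda>x a. (\<lambda>i l. f ((\<alpha> ^^ i) x) * a i l))"

definition tau_r :: "('x \<Rightarrow> 'x) \<Rightarrow> nat \<Rightarrow> ('x \<Rightarrow> 'n \<Rightarrow> complex) \<Rightarrow> 'x \<Rightarrow> 'n dvec \<Rightarrow> 'n dvec" where
  "tau_r \<alpha> r \<xi> = (\<lambda>x a. (\<lambda>i. if i = 0 \<or> r \<le> i then (\<lambda>l. 0)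
                              else etensor (\<xi> ((\<alpha> ^^ (i - 1)) x)) (a (i - 1))))"

end

theory Submission
  imports Defs
begin

lemma line_rep:
  assumes "line_bundle L" "v \<in> L x" "w \<in> L x"
  shows "\<exists>v0 c1 c2. v0 \<in> L x \<and> v = vscale c1 v0 \<and> w = vscale c2 v0"
proof -
  obtain v0 where L: "L x = {vscale c v0 | c. True}" using assms(1) unfolding line_bundle_def by meson
  obtain c1 where c1: "v = vscale c1 v0" using assms(2) unfolding L by auto
  obtain c2 where c2: "w = vscale c2 v0" using assms(3) unfolding L by auto
  have "v0 = vscale 1 v0" by (simp add: vscale_def)
  then have "v0 \<in> L x" unfolding L by auto
  then show ?thesis using c1 c2 by auto
qed

lemma line_scale:
  assumes "line_bundle L" "v \<in> L x"
  shows "vscale c v \<in> L x"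
proof -
  obtain v0 where L: "L x = {vscale c v0 | c. True}" using assms(1) unfolding line_bundle_def by meson
  then obtain c1 where "v = vscale c1 v0" using assms(2) by auto
  then have "vscale c v = vscale (c*c1) v0" by (simp add: vscale_def fun_eq_iff)
  then show ?thesis unfolding L by auto
qed

lemma line_nonempty:
  assumes "line_bundle L" shows "\<exists>v. v \<in> L x"
proof -
  obtain v0 where L: "L x = {vscale c v0 | c. True}" using assms(1) unfolding line_bundle_def by meson
  then show ?thesis by auto
qed

lemma rank1:
  assumes "line_bundle L" "v \<in> L y" "w \<in> L y"
  shows "vinner u w * v h = vinner u v * w h"
proof -
  obtain v0 c1 c2 where "v = vscale c1 v0" "w = vscale c2 v0" using line_rep[OF assms] by blast
  then show ?thesis by (simp add: vinner_def vscale_def sum_distrib_left sum_distrib_right algebra_simps)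
qed

lemma Vfib_scale:
  "a \<in> Vfib L \<alpha> i x \<Longrightarrow> (\<lambda>l. c * a l) \<in> Vfib L \<alpha> i x"
proof (induction i arbitrary: a)
  case 0
  then obtain d where "a = (\<lambda>l. if l = [] then d else 0)" by auto
  then have "(\<lambda>l. c * a l) = (\<lambda>l. if l = [] then c*d else 0)" by auto
  then show ?case by auto
next
  case (Suc i)
  then obtain v a' where va: "a = etensor v a'" "v \<in> L ((\<alpha> ^^ i) x)" "a' \<in> Vfib L \<alpha> i x" by auto
  have "(\<lambda>l. c * a l) = etensor v (\<lambda>l. c * a' l)"
    by (auto simp: va etensor_def fun_eq_iff split: list.split)
  then show ?case using Suc.IH[OF va(3)] va(2) by auto
qed

lemma Vfib_zero:
  assumes "line_bundle L" shows "(\<lambda>l. 0) \<in> Vfib L \<alpha> i x"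
proof (induction i)
  case 0
  have "(\<lambda>l::'a list. 0::complex) = (\<lambda>l. if l = [] then 0 else 0)" by auto
  then show ?case by (auto intro!: exI[of _ 0])
next
  case (Suc i)
  obtain v where "v \<in> L ((\<alpha> ^^ i) x)" using line_nonempty[OF assms] by blast
  moreover have "(\<lambda>l. 0) = etensor v (\<lambda>l. 0)"
    by (auto simp: etensor_def fun_eq_iff split: list.split)
  ultimately show ?case using Suc by auto
qed

lemma Vfib_add:
  assumes "line_bundle L"
  shows "a \<in> Vfib L \<alpha> i x \<Longrightarrow> b \<in> Vfib L \<alpha> i x \<Longrightarrow> (\<lambda>l. a l + b l) \<in> Vfib L \<alpha> i x"
proof (induction i arbitrary: a b)
  case 0
  then obtain d e where "a = (\<lambda>l. if l = [] then d else 0)" "b = (\<lambda>l. if l = [] then e else 0)" by auto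
  then have "(\<lambda>l. a l + b l) = (\<lambda>l. if l = [] then d+e else 0)" by auto
  then show ?case by auto
next
  case (Suc i)
  obtain v a' where va: "a = etensor v a'" "v \<in> L ((\<alpha> ^^ i) x)" "a' \<in> Vfib L \<alpha> i x" using Suc.prems by auto
  obtain w b' where wb: "b = etensor w b'" "w \<in> L ((\<alpha> ^^ i) x)" "b' \<in> Vfib L \<alpha> i x" using Suc.prems by auto
  obtain v0 c1 c2 where v0: "v0 \<in> L ((\<alpha> ^^ i) x)" "v = vscale c1 v0" "w = vscale c2 v0"
    using line_rep[OF assms va(2) wb(2)] by blast
  have "(\<lambda>l. a l + b l) = etensor v0 (\<lambda>l. (c1 * a' l) + (c2 * b' l))"
    by (auto simp: va wb v0 etensor_def vscale_def fun_eq_iff algebra_simps split: list.split)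
  moreover have "(\<lambda>l. (c1 * a' l) + (c2 * b' l)) \<in> Vfib L \<alpha> i x"
    using Suc.IH[OF Vfib_scale[OF va(3)] Vfib_scale[OF wb(3)]] .
  ultimately show ?case using v0(1) by auto
qed

lemma Vfib_supp:
  "a \<in> Vfib L \<alpha> i x \<Longrightarrow> length l \<noteq> i \<Longrightarrow> a l = 0"
proof (induction i arbitrary: a l)
  case 0 then show ?case by auto
next
  case (Suc i)
  then obtain v a' where va: "a = etensor v a'" "a' \<in> Vfib L \<alpha> i x" by auto
  show ?case using Suc va by (auto simp: etensor_def split: list.split)
qed

lemma finite_Ln: "finite {l::('n::finite) list. length l = i}"
  using finite_lists_length_eq[of "UNIV::'n set" i] by simp

lemma sum_Ln_Suc:
  "(\<Sum>l\<in>{l::('n::finite) list. length l = Suc i}. g l) = (\<Sum>h\<in>UNIV. \<Sum>t\<in>{t. length t = i}. g (h # t))"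
proof -
  have eq: "{l::'n list. length l = Suc i} = (\<lambda>(h,t). h # t) ` (UNIV \<times> {t. length t = i})"
    by (auto simp: image_iff length_Suc_conv)
  have inj: "inj_on (\<lambda>(h,t). h # t) (UNIV \<times> {t::'n list. length t = i})"
    by (auto simp: inj_on_def)
  show ?thesis unfolding eq sum.reindex[OF inj]
    by (simp add: sum.cartesian_product split_beta)
qed

lemma tinner_etensor2:
  "tinner (Suc i) (etensor v a) (etensor w b) = vinner v w * tinner i a b"
  unfolding tinner_def sum_Ln_Suc vinner_def
  apply (simp add: etensor_def sum_distrib_left sum_distrib_right algebra_simps)
  apply (subst sum.swap) by simp

lemma tinner_etensor_right:
  "tinner (Suc j) A (etensor w B) = tinner j (\<lambda>t. \<Sum>h\<in>UNIV. cnj (w h) * A (h # t)) B"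
  unfolding tinner_def sum_Ln_Suc
  apply (simp add: etensor_def sum_distrib_left sum_distrib_right algebra_simps)
  apply (subst sum.swap) by simp

lemma Dfib_lin:
  assumes "line_bundle L" "a \<in> Dfib L \<alpha> r x" "b \<in> Dfib L \<alpha> r x"
  shows "dadd (dscale c a) b \<in> Dfib L \<alpha> r x"
  using assms Vfib_add[OF assms(1) Vfib_scale] unfolding Dfib_def dadd_def dscale_def
  by auto

lemma Dfib_high: "a \<in> Dfib L \<alpha> r x \<Longrightarrow> r \<le> i \<Longrightarrow> a i = (\<lambda>l. 0)"
  unfolding Dfib_def by auto

lemma Dfib_low: "a \<in> Dfib L \<alpha> r x \<Longrightarrow> i < r \<Longrightarrow> a i \<in> Vfib L \<alpha> i x"
  unfolding Dfib_def by auto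

lemma Dinner_lin:
  "Dinner r (dadd (dscale s a) b) e = cnj s * Dinner r a e + Dinner r b e"
  unfolding Dinner_def tinner_def dadd_def dscale_def
  by (simp add: sum_distrib_left sum.distrib algebra_simps)

lemma cnj_mult_self: "cnj z * z = complex_of_real ((cmod z)^2)"
  using complex_norm_square[of z] by (simp add: mult.commute)

lemma Dinner_pos:
  assumes "a \<in> Dfib L \<alpha> r x" "Dinner r a a = 0"
  shows "a = (\<lambda>i l. 0)"
proof -
  define F where "F i = (\<Sum>l\<in>{l. length l = i}. (cmod (a i l))^2)" for i
  have eq: "Dinner r a a = complex_of_real (\<Sum>i<r. F i)"
    unfolding Dinner_def tinner_def of_real_sum F_def cnj_mult_self by (rule refl)
  then have S: "(\<Sum>i<r. F i) = 0"
    using assms(2) of_real_eq_0_iff by metis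
  have Fnn: "\<And>i. 0 \<le> F i" unfolding F_def by (intro sum_nonneg) simp
  have F0: "\<And>i. i < r \<Longrightarrow> F i = 0"
    using sum_nonneg_eq_0_iff[of "{..<r}" F] S Fnn by simp
  have z: "a i l = 0" if "i < r" "length l = i" for i l
  proof -
    have "(\<Sum>l\<in>{l. length l = i}. (cmod (a i l))^2) = 0" using F0[OF that(1)] unfolding F_def .
    then have "\<forall>l\<in>{l. length l = i}. (cmod (a i l))^2 = 0"
      using sum_nonneg_eq_0_iff[of "{l. length l = i}" "\<lambda>l. (cmod (a i l))^2"] by (simp add: finite_Ln)
    then show ?thesis using that(2) by simp
  qed
  show ?thesis
  proof (intro ext)
    fix i l
    show "a i l = 0"
    proof (cases "i < r")
      case True
      then show ?thesis using z Vfib_supp[OF Dfib_low[OF assms(1) True]] by (cases "length l = i") auto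
    next
      case False
      then show ?thesis using Dfib_high[OF assms(1)] by auto
    qed
  qed
qed

lemma op_adj_eq:
  assumes "line_bundle L" "c \<in> Dfib L \<alpha> r x"
    and "\<And>b. b \<in> Dfib L \<alpha> r x \<Longrightarrow> Dinner r c b = Dinner r a (T b)"
  shows "op_adj (Dfib L \<alpha> r x) (Dinner r) T a = c"
  unfolding op_adj_def
proof (rule the_equality)
  show "c \<in> Dfib L \<alpha> r x \<and> (\<forall>b\<in>Dfib L \<alpha> r x. Dinner r c b = Dinner r a (T b))"
    using assms by auto
next
  fix c' assume c': "c' \<in> Dfib L \<alpha> r x \<and> (\<forall>b\<in>Dfib L \<alpha> r x. Dinner r c' b = Dinner r a (T b))"
  define d where "d = dadd (dscale (-1) c') c"
  have dD: "d \<in> Dfib L \<alpha> r x" unfolding d_def using Dfib_lin[OF assms(1)] c' assms(2) by blast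
  have "Dinner r d d = 0" unfolding d_def Dinner_lin
    using c' assms(3)[OF dD[unfolded d_def]] dD[unfolded d_def] by simp
  then have "d = (\<lambda>i l. 0)" using Dinner_pos[OF dD] by blast
  then have h: "\<And>i l. d i l = 0" by simp
  show "c' = c"
  proof (intro ext)
    fix i l
    have "-1 * c' i l + c i l = 0" using h[of i l] unfolding d_def dadd_def dscale_def by simp
    then have "c i l - c' i l = 0" by simp
    then show "c' i l = c i l" by simp
  qed
qed

lemma cont_funpow:
  fixes \<alpha> :: "'a::topological_space \<Rightarrow> 'a"
  shows "continuous_on UNIV \<alpha> \<Longrightarrow> continuous_on UNIV (\<alpha> ^^ n)"
proof (induction n)
  case 0
  have "(\<alpha> ^^ 0) = id" by (simp add: fun_eq_iff)
  then show ?case by (simp add: continuous_on_id')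
next
  case (Suc n)
  then show ?case by (simp add: continuous_on_compose2[of UNIV \<alpha> UNIV "\<alpha>^^n"])
qed

lemma cont_coord2:
  assumes "continuous_on Z a"
  shows "continuous_on Z (\<lambda>x. a x i l)"
  using continuous_on_product_then_coordinatewise[OF continuous_on_product_then_coordinatewise[OF assms, of i], of l] .

lemma cont_comp_UNIV:
  assumes "continuous_on UNIV f" "continuous_on UNIV g"
  shows "continuous_on Z (\<lambda>x. f (g x))"
  using continuous_on_compose2[OF assms(1) assms(2)] continuous_on_subset by blast

lemma EY_props:
  assumes "\<xi> \<in> EY L \<alpha> Y" "line_bundle L" "continuous_on UNIV \<alpha>"
  shows "continuous_on UNIV \<xi>" "\<And>x. \<xi> x \<in> L x" "\<And>x. \<alpha> x \<in> Y \<Longrightarrow> \<xi> x = (\<lambda>j. 0)"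
proof -
  obtain f \<xi>0 where d: "\<xi> = lact \<alpha> f \<xi>0" "f \<in> C0_compl Y" "\<xi>0 \<in> Esec L"
    using assms(1) unfolding EY_def by blast
  have fc: "continuous_on UNIV f" and f0: "\<And>y. y \<in> Y \<Longrightarrow> f y = 0" using d(2) unfolding C0_compl_def by auto
  have xc: "continuous_on UNIV \<xi>0" and xL: "\<And>x. \<xi>0 x \<in> L x" using d(3) unfolding Esec_def by auto
  have "continuous_on UNIV (\<lambda>x. \<lambda>j. f (\<alpha> x) * \<xi>0 x j)"
  proof (intro continuous_on_coordinatewise_then_product continuous_on_mult)
    fix j
    show "continuous_on UNIV (\<lambda>x. f (\<alpha> x))" using cont_comp_UNIV[OF fc assms(3)] .
    show "continuous_on UNIV (\<lambda>x. \<xi>0 x j)" using continuous_on_product_then_coordinatewise[OF xc] .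
  qed
  then show "continuous_on UNIV \<xi>" unfolding d(1) lact_def vscale_def .
  show "\<And>x. \<xi> x \<in> L x" unfolding d(1) lact_def using line_scale[OF assms(2) xL] .
  show "\<xi> x = (\<lambda>j. 0)" if "\<alpha> x \<in> Y" for x
    unfolding d(1) lact_def vscale_def using f0[OF that] by simp
qed

lemma pi_end:
  assumes "line_bundle L" "continuous_on UNIV f" "continuous_on UNIV \<alpha>"
  shows "is_end_section Z (Dfib L \<alpha> r) (pi_r \<alpha> f)"
  unfolding is_end_section_def
proof (intro conjI ballI allI impI)
  fix x a assume "a \<in> Dfib L \<alpha> r x"
  then show "pi_r \<alpha> f x a \<in> Dfib L \<alpha> r x"
    unfolding Dfib_def pi_r_def by (auto intro!: Vfib_scale)
next
  fix x a b c
  show "pi_r \<alpha> f x (dadd (dscale c a) b) = dadd (dscale c (pi_r \<alpha> f x a)) (pi_r \<alpha> f x b)"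
    unfolding pi_r_def dadd_def dscale_def by (simp add: algebra_simps)
next
  fix a :: "'a \<Rightarrow> 'b dvec"
  assume "continuous_on Z a \<and> (\<forall>x\<in>Z. a x \<in> Dfib L \<alpha> r x)"
  then have ac: "continuous_on Z a" by blast
  show "continuous_on Z (\<lambda>x. pi_r \<alpha> f x (a x))"
    unfolding pi_r_def
  proof (intro continuous_on_coordinatewise_then_product continuous_on_mult)
    fix i l
    show "continuous_on Z (\<lambda>x. f ((\<alpha> ^^ i) x))" using cont_comp_UNIV[OF assms(2) cont_funpow[OF assms(3)]] .
    show "continuous_on Z (\<lambda>x. a x i l)" using cont_coord2[OF ac] .
  qed
qed

lemma tau_in_D:
  assumes "line_bundle L" "\<And>x. \<xi> x \<in> L x" "a \<in> Dfib L \<alpha> r x"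
  shows "tau_r \<alpha> r \<xi> x a \<in> Dfib L \<alpha> r x"
  unfolding Dfib_def
proof (intro CollectI conjI allI impI)
  fix i assume "i < r"
  show "tau_r \<alpha> r \<xi> x a i \<in> Vfib L \<alpha> i x"
  proof (cases i)
    case 0
    then have "tau_r \<alpha> r \<xi> x a i = (\<lambda>l. 0)" by (simp add: tau_r_def)
    then show ?thesis using Vfib_zero[OF assms(1)] by metis
  next
    case (Suc j)
    then have "a j \<in> Vfib L \<alpha> j x" using Dfib_low[OF assms(3)] \<open>i < r\<close> by simp
    then show ?thesis unfolding tau_r_def using Suc \<open>i < r\<close> assms(2) by auto
  qed
next
  fix i assume "r \<le> i" then show "tau_r \<alpha> r \<xi> x a i = (\<lambda>l. 0)" unfolding tau_r_def by simp
qed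

lemma tau_end:
  assumes "line_bundle L" "continuous_on UNIV \<xi>" "\<And>x. \<xi> x \<in> L x" "continuous_on UNIV \<alpha>"
  shows "is_end_section Z (Dfib L \<alpha> r) (tau_r \<alpha> r \<xi>)"
  unfolding is_end_section_def
proof (intro conjI ballI allI impI)
  fix x a assume "a \<in> Dfib L \<alpha> r x"
  then show "tau_r \<alpha> r \<xi> x a \<in> Dfib L \<alpha> r x" using tau_in_D[OF assms(1,3)] by blast
next
  fix x a b c
  show "tau_r \<alpha> r \<xi> x (dadd (dscale c a) b) = dadd (dscale c (tau_r \<alpha> r \<xi> x a)) (tau_r \<alpha> r \<xi> x b)"
    unfolding tau_r_def dadd_def dscale_def etensor_def
    by (auto simp: fun_eq_iff algebra_simps split: list.split)
next
  fix a :: "'a \<Rightarrow> 'b dvec"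
  assume "continuous_on Z a \<and> (\<forall>x\<in>Z. a x \<in> Dfib L \<alpha> r x)"
  then have ac: "continuous_on Z a" by blast
  show "continuous_on Z (\<lambda>x. tau_r \<alpha> r \<xi> x (a x))"
    unfolding tau_r_def
  proof (intro continuous_on_coordinatewise_then_product)
    fix i l
    show "continuous_on Z (\<lambda>x. (if i = 0 \<or> r \<le> i then \<lambda>l. 0 else etensor (\<xi> ((\<alpha> ^^ (i - 1)) x)) (a x (i - 1))) l)"
    proof (cases "i = 0 \<or> r \<le> i")
      case True then show ?thesis by (simp add: continuous_on_const)
    next
      case False
      show ?thesis
      proof (cases l)
        case Nil then show ?thesis using False by (simp add: etensor_def continuous_on_const)
      next
        case (Cons j l')
        have c1: "continuous_on Z (\<lambda>x. \<xi> ((\<alpha> ^^ (i - 1)) x) j)"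
          using continuous_on_product_then_coordinatewise[OF cont_comp_UNIV[OF assms(2) cont_funpow[OF assms(4)]]] .
        have c2: "continuous_on Z (\<lambda>x. a x (i - 1) l')" using cont_coord2[OF ac] .
        show ?thesis using False Cons continuous_on_mult[OF c1 c2] by (simp add: etensor_def)
      qed
    qed
  qed
qed

lemma pi_in_D: "a \<in> Dfib L \<alpha> r x \<Longrightarrow> pi_r \<alpha> f x a \<in> Dfib L \<alpha> r x"
  unfolding Dfib_def pi_r_def by (auto intro!: Vfib_scale)

lemma tinner_scale_left: "tinner i (\<lambda>l. s * a l) b = cnj s * tinner i a b"
  unfolding tinner_def by (simp add: sum_distrib_left algebra_simps)

lemma tinner_zero_left: "tinner i (\<lambda>l. 0) b = 0"
  unfolding tinner_def by simp

lemma tinner_zero_right: "tinner i a (\<lambda>l. 0) = 0"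
  unfolding tinner_def by simp

lemma cnj_vinner: "cnj (vinner u w) = vinner w u"
  unfolding vinner_def by (simp add: mult.commute)

lemma vinner_zero_left: "vinner (\<lambda>j. 0) w = 0"
  unfolding vinner_def by simp

lemma vinner_zero_right: "vinner u (\<lambda>j. 0) = 0"
  unfolding vinner_def by simp

lemma pi_adj:
  assumes "line_bundle L" "a \<in> Dfib L \<alpha> r x"
  shows "pi_r \<alpha> (\<lambda>x. cnj (f x)) x a = sadj r (Dfib L \<alpha> r) (pi_r \<alpha> f) x a"
  unfolding sadj_def
proof (rule op_adj_eq[symmetric, OF assms(1) pi_in_D[OF assms(2)]])
  fix b
  show "Dinner r (pi_r \<alpha> (\<lambda>x. cnj (f x)) x a) b = Dinner r a (pi_r \<alpha> f x b)"
    unfolding Dinner_def tinner_def pi_r_def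
    by (intro sum.cong refl) (simp add: algebra_simps)
qed

lemma part_c:
  assumes "line_bundle L" "a \<in> Dfib L \<alpha> r x"
    and H: "0 < r \<Longrightarrow> \<xi> ((\<alpha> ^^ (r - 1)) x) = (\<lambda>j. 0)"
  shows "pi_r \<alpha> (rinner \<xi> \<eta>) x a = sadj r (Dfib L \<alpha> r) (tau_r \<alpha> r \<xi>) x (tau_r \<alpha> r \<eta> x a)"
  unfolding sadj_def
proof (rule op_adj_eq[symmetric, OF assms(1) pi_in_D[OF assms(2)]])
  fix b
  show "Dinner r (pi_r \<alpha> (rinner \<xi> \<eta>) x a) b = Dinner r (tau_r \<alpha> r \<eta> x a) (tau_r \<alpha> r \<xi> x b)"
  proof (cases r)
    case 0 then show ?thesis by (simp add: Dinner_def)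
  next
    case (Suc r')
    have last: "tinner r' (pi_r \<alpha> (rinner \<xi> \<eta>) x a r') (b r') = 0"
      using H Suc unfolding pi_r_def tinner_scale_left rinner_def by (simp add: vinner_zero_left)
    have "Dinner r (pi_r \<alpha> (rinner \<xi> \<eta>) x a) b
        = (\<Sum>j<r'. tinner j (pi_r \<alpha> (rinner \<xi> \<eta>) x a j) (b j))"
      unfolding Dinner_def Suc sum.lessThan_Suc using last by simp
    also have "\<dots> = (\<Sum>j<r'. vinner (\<eta> ((\<alpha> ^^ j) x)) (\<xi> ((\<alpha> ^^ j) x)) * tinner j (a j) (b j))"
      unfolding pi_r_def tinner_scale_left rinner_def cnj_vinner by (rule refl)
    also have "\<dots> = (\<Sum>j<r'. tinner (Suc j) (tau_r \<alpha> r \<eta> x a (Suc j)) (tau_r \<alpha> r \<xi> x b (Suc j)))"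
    proof (intro sum.cong refl)
      fix j assume "j \<in> {..<r'}"
      then have "\<not> (Suc j = 0 \<or> r \<le> Suc j)" using Suc by simp
      then show "vinner (\<eta> ((\<alpha> ^^ j) x)) (\<xi> ((\<alpha> ^^ j) x)) * tinner j (a j) (b j)
          = tinner (Suc j) (tau_r \<alpha> r \<eta> x a (Suc j)) (tau_r \<alpha> r \<xi> x b (Suc j))"
        unfolding tau_r_def by (simp add: tinner_etensor2)
    qed
    also have "\<dots> = Dinner r (tau_r \<alpha> r \<eta> x a) (tau_r \<alpha> r \<xi> x b)"
      unfolding Dinner_def Suc sum.lessThan_Suc_shift by (simp add: tau_r_def tinner_zero_left)
    finally show ?thesis .
  qed
qed

lemma part_e:
  assumes "line_bundle L" "\<And>x. \<xi> x \<in> L x" "a \<in> Dfib L \<alpha> r x"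
    and inv: "\<And>z. inv \<alpha> (\<alpha> z) = z" and H: "\<xi> (inv \<alpha> x) = (\<lambda>j. 0)"
  shows "pi_r \<alpha> (linner \<alpha> \<xi> \<eta>) x a = tau_r \<alpha> r \<xi> x (sadj r (Dfib L \<alpha> r) (tau_r \<alpha> r \<eta>) x a)"
proof -
  define c where "c = (\<lambda>j. if Suc j < r then (\<lambda>l. \<Sum>h\<in>UNIV. cnj (\<eta> ((\<alpha> ^^ j) x) h) * a (Suc j) (h # l)) else (\<lambda>l. 0))"
  have cform: "\<exists>v a'. v \<in> L ((\<alpha> ^^ j) x) \<and> a' \<in> Vfib L \<alpha> j x \<and> a (Suc j) = etensor v a'
      \<and> c j = (\<lambda>l. vinner (\<eta> ((\<alpha> ^^ j) x)) v * a' l)" if "Suc j < r" for j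
  proof -
    have "a (Suc j) \<in> Vfib L \<alpha> (Suc j) x" using Dfib_low[OF assms(3) that] .
    then obtain v a' where va: "a (Suc j) = etensor v a'" "v \<in> L ((\<alpha> ^^ j) x)" "a' \<in> Vfib L \<alpha> j x" by auto
    have "c j = (\<lambda>l. vinner (\<eta> ((\<alpha> ^^ j) x)) v * a' l)"
      unfolding c_def vinner_def using that va(1) by (simp add: etensor_def sum_distrib_right mult.assoc)
    then show ?thesis using va by blast
  qed
  have cD: "c \<in> Dfib L \<alpha> r x"
    unfolding Dfib_def
  proof (intro CollectI conjI allI impI)
    fix j assume "j < r"
    show "c j \<in> Vfib L \<alpha> j x"
    proof (cases "Suc j < r")
      case True then show ?thesis using cform[OF True] Vfib_scale by metis
    next
      case False then show ?thesis unfolding c_def using Vfib_zero[OF assms(1)] by simp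
    qed
  next
    fix j assume "r \<le> j" then show "c j = (\<lambda>l. 0)" unfolding c_def by simp
  qed
  have adj: "sadj r (Dfib L \<alpha> r) (tau_r \<alpha> r \<eta>) x a = c"
    unfolding sadj_def
  proof (rule op_adj_eq[OF assms(1) cD])
    fix b
    show "Dinner r c b = Dinner r a (tau_r \<alpha> r \<eta> x b)"
    proof (cases r)
      case 0 then show ?thesis by (simp add: Dinner_def)
    next
      case (Suc r')
      have "Dinner r c b = (\<Sum>j<r'. tinner j (c j) (b j))"
        unfolding Dinner_def Suc sum.lessThan_Suc by (simp add: c_def tinner_zero_left Suc)
      also have "\<dots> = (\<Sum>j<r'. tinner (Suc j) (a (Suc j)) (tau_r \<alpha> r \<eta> x b (Suc j)))"
      proof (intro sum.cong refl)
        fix j assume "j \<in> {..<r'}"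
        then have "\<not> (Suc j = 0 \<or> r \<le> Suc j)" "Suc j < r" using Suc by auto
        then show "tinner j (c j) (b j) = tinner (Suc j) (a (Suc j)) (tau_r \<alpha> r \<eta> x b (Suc j))"
          unfolding tau_r_def c_def by (simp add: tinner_etensor_right)
      qed
      also have "\<dots> = Dinner r a (tau_r \<alpha> r \<eta> x b)"
        unfolding Dinner_def Suc sum.lessThan_Suc_shift by (simp add: tau_r_def tinner_zero_right)
      finally show ?thesis .
    qed
  qed
  show ?thesis
    unfolding adj
  proof (intro ext)
    fix i l
    show "pi_r \<alpha> (linner \<alpha> \<xi> \<eta>) x a i l = tau_r \<alpha> r \<xi> x c i l"
    proof (cases "i = 0 \<or> r \<le> i")
      case True
      then show ?thesis
      proof
        assume "i = 0" then show ?thesis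
          by (simp add: pi_r_def tau_r_def linner_def rinner_def H vinner_zero_right)
      next
        assume "r \<le> i" then show ?thesis
          using Dfib_high[OF assms(3)] by (simp add: pi_r_def tau_r_def)
      qed
    next
      case False
      then obtain j where j: "i = Suc j" "Suc j < r" by (cases i) auto
      obtain v a' where va: "v \<in> L ((\<alpha> ^^ j) x)" "a (Suc j) = etensor v a'"
          "c j = (\<lambda>l. vinner (\<eta> ((\<alpha> ^^ j) x)) v * a' l)" using cform[OF j(2)] by blast
      have lin: "linner \<alpha> \<xi> \<eta> ((\<alpha> ^^ Suc j) x) = vinner (\<eta> ((\<alpha> ^^ j) x)) (\<xi> ((\<alpha> ^^ j) x))"
        unfolding linner_def rinner_def by (simp add: inv)
      have r1: "vinner (\<eta> ((\<alpha> ^^ j) x)) (\<xi> ((\<alpha> ^^ j) x)) * v h = vinner (\<eta> ((\<alpha> ^^ j) x)) v * \<xi> ((\<alpha> ^^ j) x) h" for h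
        using rank1[OF assms(1) va(1) assms(2)] .
      show ?thesis
        using False j va lin r1 unfolding pi_r_def tau_r_def
        by (cases l) (simp_all add: etensor_def algebra_simps)
    qed
  qed
qed

lemma part_d1:
  "tau_r \<alpha> r (lact \<alpha> f \<xi>) x a = scomp (pi_r \<alpha> f) (tau_r \<alpha> r \<xi>) x a"
  unfolding scomp_def
proof (intro ext)
  fix i l show "tau_r \<alpha> r (lact \<alpha> f \<xi>) x a i l = pi_r \<alpha> f x (tau_r \<alpha> r \<xi> x a) i l"
    by (cases i; cases l) (auto simp: tau_r_def pi_r_def lact_def vscale_def etensor_def)
qed

lemma part_d2:
  "tau_r \<alpha> r (lact \<alpha> f \<xi>) x a = scomp (tau_r \<alpha> r \<xi>) (pi_r \<alpha> (f \<circ> \<alpha>)) x a"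
  unfolding scomp_def
proof (intro ext)
  fix i l show "tau_r \<alpha> r (lact \<alpha> f \<xi>) x a i l = tau_r \<alpha> r \<xi> x (pi_r \<alpha> (f \<circ> \<alpha>) x a) i l"
    by (cases i; cases l) (auto simp: tau_r_def pi_r_def lact_def vscale_def etensor_def funpow_swap1)
qed

lemma part_b:
  "tau_r \<alpha> r (\<lambda>x. (\<lambda>j. c * \<xi> x j + \<eta> x j)) x a = sadd (sscale c (tau_r \<alpha> r \<xi>)) (tau_r \<alpha> r \<eta>) x a"
  unfolding sadd_def sscale_def
proof (intro ext)
  fix i l show "tau_r \<alpha> r (\<lambda>x. (\<lambda>j. c * \<xi> x j + \<eta> x j)) x a i l = dadd (dscale c (tau_r \<alpha> r \<xi> x a)) (tau_r \<alpha> r \<eta> x a) i l"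
    by (cases l) (auto simp: tau_r_def dadd_def dscale_def etensor_def algebra_simps)
qed

lemma open_vimage_UNIV:
  "continuous_on UNIV f \<Longrightarrow> open B \<Longrightarrow> open (f -` B)"
  using continuous_on_open_vimage[of UNIV f] by simp

lemma closed_vimage_UNIV:
  "continuous_on UNIV f \<Longrightarrow> closed B \<Longrightarrow> closed (f -` B)"
  using continuous_on_closed_vimage[of UNIV f] by simp

lemma beta_alpha:
  assumes ba: "\<And>x. \<beta> (\<alpha> x) = x"
  shows "m \<le> p \<Longrightarrow> (\<beta> ^^ m) ((\<alpha> ^^ p) y) = (\<alpha> ^^ (p - m)) y"
proof (induction m)
  case 0 then show ?case by simp
next
  case (Suc m)
  then have IH: "(\<beta> ^^ m) ((\<alpha> ^^ p) y) = (\<alpha> ^^ (p - m)) y" by simp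
  have e: "p - m = Suc (p - Suc m)" using Suc.prems by simp
  show ?case using IH by (simp add: e ba)
qed

lemma recurrence:
  fixes \<alpha> \<beta> :: "'x::topological_space \<Rightarrow> 'x"
  assumes cpt: "compact (UNIV :: 'x set)" and hom: "homeomorphism UNIV UNIV \<alpha> \<beta>"
    and mini: "minimal_map \<alpha>" and U: "open U" "U \<noteq> {}"
  shows "\<exists>n\<ge>1. (\<alpha> ^^ n) y \<in> U"
proof -
  have ca: "continuous_on UNIV \<alpha>" and cb: "continuous_on UNIV \<beta>"
    and ba: "\<And>x. \<beta> (\<alpha> x) = x" and ab: "\<And>x. \<alpha> (\<beta> x) = x"
    using hom unfolding homeomorphism_def by auto
  define Wf where "Wf = (\<lambda>(n::nat, m::nat). {x. (\<beta> ^^ m) ((\<alpha> ^^ n) x) \<in> U})"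
  have Wf_open: "open (Wf nm)" for nm
  proof -
    obtain n m where nm: "nm = (n, m)" by (cases nm)
    have "Wf nm = (\<lambda>x. (\<beta> ^^ m) ((\<alpha> ^^ n) x)) -` U" unfolding Wf_def nm by auto
    moreover have "continuous_on UNIV (\<lambda>x. (\<beta> ^^ m) ((\<alpha> ^^ n) x))"
      using cont_comp_UNIV[OF cont_funpow[OF cb] cont_funpow[OF ca]] .
    ultimately show ?thesis using open_vimage_UNIV U(1) by metis
  qed
  define W where "W = (\<Union>nm\<in>UNIV. Wf nm)"
  have Wopen: "open W" unfolding W_def using Wf_open by blast
  have step1: "\<alpha> x \<in> W" if xW: "x \<in> W" for x
  proof -
    obtain n m where "(\<beta> ^^ m) ((\<alpha> ^^ n) x) \<in> U" using xW unfolding W_def Wf_def by auto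
    moreover have "(\<beta> ^^ Suc m) ((\<alpha> ^^ n) (\<alpha> x)) = (\<beta> ^^ m) ((\<alpha> ^^ n) x)"
      by (simp only: funpow_Suc_right comp_apply funpow_swap1[symmetric] ba)
    ultimately have "\<alpha> x \<in> Wf (n, Suc m)" unfolding Wf_def by simp
    then show ?thesis unfolding W_def by blast
  qed
  have step2: "x \<in> W" if xW: "\<alpha> x \<in> W" for x
  proof -
    obtain n m where "(\<beta> ^^ m) ((\<alpha> ^^ n) (\<alpha> x)) \<in> U" using xW unfolding W_def Wf_def by auto
    moreover have "(\<alpha> ^^ n) (\<alpha> x) = (\<alpha> ^^ Suc n) x"
      by (simp only: funpow_Suc_right comp_apply)
    ultimately have "x \<in> Wf (Suc n, m)" unfolding Wf_def by simp
    then show ?thesis unfolding W_def by blast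
  qed
  define C where "C = - W"
  have Cclosed: "closed C" unfolding C_def using Wopen by (simp add: closed_Compl)
  have Cinv: "\<alpha> ` C = C"
  proof
    show "\<alpha> ` C \<subseteq> C" unfolding C_def using step2 by blast
    show "C \<subseteq> \<alpha> ` C"
    proof
      fix z assume z: "z \<in> C"
      have "\<beta> z \<in> C" using z step1 ab unfolding C_def by (metis ComplD ComplI)
      then show "z \<in> \<alpha> ` C" using ab[of z] by (metis image_eqI)
    qed
  qed
  have "U \<subseteq> Wf (0, 0)" unfolding Wf_def by simp
  then have UW: "U \<subseteq> W" unfolding W_def by blast
  have "C = {} \<or> C = UNIV" using mini Cclosed Cinv unfolding minimal_map_def by blast
  moreover have "C \<noteq> UNIV" using UW U(2) unfolding C_def by blast
  ultimately have "W = UNIV" unfolding C_def by (metis Compl_empty_eq double_compl)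
  then have cov: "UNIV \<subseteq> (\<Union>nm\<in>UNIV. Wf nm)" unfolding W_def by simp
  obtain T where T: "finite T" "UNIV \<subseteq> (\<Union>nm\<in>T. Wf nm)"
    using compactE_image[OF cpt _ cov] Wf_open by metis
  obtain N where N: "\<forall>m\<in>snd ` T. m \<le> N" using T(1) finite_nat_set_iff_bounded_le by blast
  obtain nm where nm: "nm \<in> T" "(\<alpha> ^^ Suc N) y \<in> Wf nm" using T(2) by blast
  obtain n m where nm2: "nm = (n, m)" by (cases nm)
  have mN: "m \<le> N" using N nm(1) nm2 by force
  have "(\<beta> ^^ m) ((\<alpha> ^^ n) ((\<alpha> ^^ Suc N) y)) \<in> U" using nm(2) unfolding nm2 Wf_def by simp
  moreover have "(\<alpha> ^^ n) ((\<alpha> ^^ Suc N) y) = (\<alpha> ^^ (n + Suc N)) y" by (simp only: funpow_add comp_apply)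
  moreover have "(\<beta> ^^ m) ((\<alpha> ^^ (n + Suc N)) y) = (\<alpha> ^^ (n + Suc N - m)) y"
    using beta_alpha[of \<beta> \<alpha> m "n + Suc N" y] ba mN by simp
  ultimately have "(\<alpha> ^^ (n + Suc N - m)) y \<in> U" by simp
  moreover have "1 \<le> n + Suc N - m" using mN by simp
  ultimately show ?thesis by blast
qed

theorem lemma7p3:
  fixes \<alpha> :: "'x::metric_space \<Rightarrow> 'x"
    and L :: "'x \<Rightarrow> ('n::finite \<Rightarrow> complex) set"
    and Y :: "'x set"
    and k :: nat
  assumes "compact (UNIV :: 'x set)" and "infinite (UNIV :: 'x set)"
    and "\<exists>\<beta>. homeomorphism UNIV UNIV \<alpha> \<beta>" and "minimal_map \<alpha>"
    and "line_bundle L"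
    and "closed Y" and "interior Y \<noteq> {}"
    and "1 \<le> k" and "k \<le> num_ret \<alpha> Y"
  defines "r \<equiv> ret_time \<alpha> Y k"
    and "Z \<equiv> closure (ret_piece \<alpha> Y k)"
    and "D \<equiv> Dfib L \<alpha> (ret_time \<alpha> Y k)"
  shows
    \<comment> \<open>(a) pi_k is a *-homomorphism C(X) \<rightarrow> \<Gamma>(M_k)\<close>
    "(\<forall>f. continuous_on UNIV f \<longrightarrow> is_end_section Z D (pi_r \<alpha> f)) \<and>
     (\<forall>f g c. continuous_on UNIV f \<longrightarrow> continuous_on UNIV g \<longrightarrow>
        sect_eq Z D (pi_r \<alpha> (\<lambda>x. c * f x + g x)) (sadd (sscale c (pi_r \<alpha> f)) (pi_r \<alpha> g)) \<and>
        sect_eq Z D (pi_r \<alpha> (\<lambda>x. f x * g x)) (scomp (pi_r \<alpha> f) (pi_r \<alpha> g)) \<and>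
        sect_eq Z D (pi_r \<alpha> (\<lambda>x. cnj (f x))) (sadj r D (pi_r \<alpha> f))) \<and>
     \<comment> \<open>(b) tau_k is linear E_Y \<rightarrow> \<Gamma>(M_k)\<close>
     (\<forall>\<xi>\<in>EY L \<alpha> Y. is_end_section Z D (tau_r \<alpha> r \<xi>)) \<and>
     (\<forall>\<xi>\<in>EY L \<alpha> Y. \<forall>\<eta>\<in>EY L \<alpha> Y. \<forall>c.
        sect_eq Z D (tau_r \<alpha> r (\<lambda>x. (\<lambda>j. c * \<xi> x j + \<eta> x j)))
                    (sadd (sscale c (tau_r \<alpha> r \<xi>)) (tau_r \<alpha> r \<eta>))) \<and>
     \<comment> \<open>(c)\<close>
     (\<forall>\<xi>\<in>EY L \<alpha> Y. \<forall>\<eta>\<in>EY L \<alpha> Y.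
        sect_eq Z D (pi_r \<alpha> (rinner \<xi> \<eta>)) (scomp (sadj r D (tau_r \<alpha> r \<xi>)) (tau_r \<alpha> r \<eta>))) \<and>
     \<comment> \<open>(d)\<close>
     (\<forall>f. \<forall>\<xi>\<in>EY L \<alpha> Y. continuous_on UNIV f \<longrightarrow>
        sect_eq Z D (tau_r \<alpha> r (lact \<alpha> f \<xi>)) (scomp (pi_r \<alpha> f) (tau_r \<alpha> r \<xi>)) \<and>
        sect_eq Z D (tau_r \<alpha> r (lact \<alpha> f \<xi>)) (scomp (tau_r \<alpha> r \<xi>) (pi_r \<alpha> (f \<circ> \<alpha>)))) \<and>
     \<comment> \<open>(e)\<close>
     (\<forall>\<xi>\<in>EY L \<alpha> Y. \<forall>\<eta>\<in>EY L \<alpha> Y.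
        sect_eq Z D (pi_r \<alpha> (linner \<alpha> \<xi> \<eta>)) (scomp (tau_r \<alpha> r \<xi>) (sadj r D (tau_r \<alpha> r \<eta>))))"
proof -
  obtain \<beta> where hom: "homeomorphism UNIV UNIV \<alpha> \<beta>" using assms(3) by blast
  have ca: "continuous_on UNIV \<alpha>" using hom by (simp add: homeomorphism_def)
  have ba: "\<And>x. \<beta> (\<alpha> x) = x" using hom by (simp add: homeomorphism_def)
  have ab: "\<And>x. \<alpha> (\<beta> x) = x" using hom by (simp add: homeomorphism_def)
  have injA: "inj \<alpha>"
  proof (rule injI)
    fix x y assume "\<alpha> x = \<alpha> y"
    then have "\<beta> (\<alpha> x) = \<beta> (\<alpha> y)" by simp
    then show "x = y" by (simp add: ba)
  qed
  have invA: "\<And>z. inv \<alpha> (\<alpha> z) = z" using inv_f_f[OF injA] .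
  have invB: "inv \<alpha> x = \<beta> x" for x
  proof -
    have "inv \<alpha> x = inv \<alpha> (\<alpha> (\<beta> x))" by (simp add: ab)
    also have "\<dots> = \<beta> x" by (rule invA)
    finally show ?thesis .
  qed
  have lb: "line_bundle L" by fact
  have Deq: "D = Dfib L \<alpha> r" unfolding D_def r_def ..
  have "ret_piece \<alpha> Y k \<subseteq> Y" unfolding ret_piece_def by auto
  then have ZY: "Z \<subseteq> Y" unfolding Z_def using closure_minimal[OF _ assms(6)] by simp
  have Zret: "1 \<le> r \<and> (\<alpha> ^^ r) x \<in> Y" if xZ: "x \<in> Z" for x
  proof -
    have ne: "ret_piece \<alpha> Y k \<noteq> {}" using xZ unfolding Z_def by auto
    then obtain y where y: "y \<in> Y" "first_return \<alpha> Y y = r" unfolding ret_piece_def r_def by auto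
    have "\<exists>n\<ge>1. (\<alpha> ^^ n) y \<in> interior Y"
      using recurrence[OF assms(1) hom assms(4) open_interior assms(7)] .
    then have "\<exists>n. 1 \<le> n \<and> (\<alpha> ^^ n) y \<in> Y" using interior_subset by blast
    then have "1 \<le> first_return \<alpha> Y y \<and> (\<alpha> ^^ first_return \<alpha> Y y) y \<in> Y"
      unfolding first_return_def by (rule LeastI_ex)
    then have r1: "1 \<le> r" using y by simp
    have sub: "ret_piece \<alpha> Y k \<subseteq> (\<alpha> ^^ r) -` Y"
    proof
      fix z assume z: "z \<in> ret_piece \<alpha> Y k"
      then have zY: "z \<in> Y" and fr: "first_return \<alpha> Y z = r" unfolding ret_piece_def r_def by auto
      have "\<exists>n\<ge>1. (\<alpha> ^^ n) z \<in> interior Y"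
        using recurrence[OF assms(1) hom assms(4) open_interior assms(7)] .
      then have "\<exists>n. 1 \<le> n \<and> (\<alpha> ^^ n) z \<in> Y" using interior_subset by blast
      then have "1 \<le> first_return \<alpha> Y z \<and> (\<alpha> ^^ first_return \<alpha> Y z) z \<in> Y"
        unfolding first_return_def by (rule LeastI_ex)
      then show "z \<in> (\<alpha> ^^ r) -` Y" using fr by simp
    qed
    have "closed ((\<alpha> ^^ r) -` Y)" using closed_vimage_UNIV[OF cont_funpow[OF ca] assms(6)] .
    then have "Z \<subseteq> (\<alpha> ^^ r) -` Y" unfolding Z_def using closure_minimal[OF sub] by blast
    then show ?thesis using r1 xZ by auto
  qed
  have EYc: "continuous_on UNIV \<xi>" and EYL: "\<And>x. \<xi> x \<in> L x"
    and EY0: "\<And>x. \<alpha> x \<in> Y \<Longrightarrow> \<xi> x = (\<lambda>j. 0)" if "\<xi> \<in> EY L \<alpha> Y" for \<xi>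
    using EY_props[OF that lb ca] by auto
  have A1: "\<forall>f. continuous_on UNIV f \<longrightarrow> is_end_section Z D (pi_r \<alpha> f)"
  proof (intro allI impI)
    fix f :: "'x \<Rightarrow> complex" assume "continuous_on UNIV f"
    then show "is_end_section Z D (pi_r \<alpha> f)" unfolding Deq by (rule pi_end[OF lb _ ca])
  qed
  have A2: "\<forall>f g c. continuous_on UNIV f \<longrightarrow> continuous_on UNIV g \<longrightarrow>
        sect_eq Z D (pi_r \<alpha> (\<lambda>x. c * f x + g x)) (sadd (sscale c (pi_r \<alpha> f)) (pi_r \<alpha> g)) \<and>
        sect_eq Z D (pi_r \<alpha> (\<lambda>x. f x * g x)) (scomp (pi_r \<alpha> f) (pi_r \<alpha> g)) \<and>
        sect_eq Z D (pi_r \<alpha> (\<lambda>x. cnj (f x))) (sadj r D (pi_r \<alpha> f))"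
  proof (intro allI impI conjI)
    fix f g :: "'x \<Rightarrow> complex" and c :: complex
    show "sect_eq Z D (pi_r \<alpha> (\<lambda>x. c * f x + g x)) (sadd (sscale c (pi_r \<alpha> f)) (pi_r \<alpha> g))"
      unfolding sect_eq_def pi_r_def sadd_def sscale_def dadd_def dscale_def by (simp add: algebra_simps)
    show "sect_eq Z D (pi_r \<alpha> (\<lambda>x. f x * g x)) (scomp (pi_r \<alpha> f) (pi_r \<alpha> g))"
      unfolding sect_eq_def pi_r_def scomp_def by (simp add: algebra_simps)
    show "sect_eq Z D (pi_r \<alpha> (\<lambda>x. cnj (f x))) (sadj r D (pi_r \<alpha> f))"
      unfolding sect_eq_def Deq by (intro ballI pi_adj[OF lb])
  qed
  have B1: "\<forall>\<xi>\<in>EY L \<alpha> Y. is_end_section Z D (tau_r \<alpha> r \<xi>)"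
  proof (intro ballI)
    fix \<xi> assume \<xi>: "\<xi> \<in> EY L \<alpha> Y"
    show "is_end_section Z D (tau_r \<alpha> r \<xi>)" unfolding Deq by (rule tau_end[OF lb EYc[OF \<xi>] EYL[OF \<xi>] ca])
  qed
  have B2: "\<forall>\<xi>\<in>EY L \<alpha> Y. \<forall>\<eta>\<in>EY L \<alpha> Y. \<forall>c.
        sect_eq Z D (tau_r \<alpha> r (\<lambda>x. (\<lambda>j. c * \<xi> x j + \<eta> x j)))
                    (sadd (sscale c (tau_r \<alpha> r \<xi>)) (tau_r \<alpha> r \<eta>))"
    unfolding sect_eq_def by (intro ballI allI part_b)
  have C: "\<forall>\<xi>\<in>EY L \<alpha> Y. \<forall>\<eta>\<in>EY L \<alpha> Y.
        sect_eq Z D (pi_r \<alpha> (rinner \<xi> \<eta>)) (scomp (sadj r D (tau_r \<alpha> r \<xi>)) (tau_r \<alpha> r \<eta>))"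
  proof (intro ballI)
    fix \<xi> \<eta> assume \<xi>: "\<xi> \<in> EY L \<alpha> Y" and "\<eta> \<in> EY L \<alpha> Y"
    show "sect_eq Z D (pi_r \<alpha> (rinner \<xi> \<eta>)) (scomp (sadj r D (tau_r \<alpha> r \<xi>)) (tau_r \<alpha> r \<eta>))"
      unfolding sect_eq_def scomp_def
    proof (intro ballI)
      fix x a assume xZ: "x \<in> Z" and aD: "a \<in> D x"
      have H: "\<xi> ((\<alpha> ^^ (r - 1)) x) = (\<lambda>j. 0)"
      proof -
        have r1: "1 \<le> r" and rY: "(\<alpha> ^^ r) x \<in> Y" using Zret[OF xZ] by auto
        have "r = Suc (r - 1)" using r1 by simp
        then have "\<alpha> ((\<alpha> ^^ (r - 1)) x) = (\<alpha> ^^ r) x" by (metis comp_apply funpow.simps(2))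
        then show ?thesis using EY0[OF \<xi>] rY by metis
      qed
      show "pi_r \<alpha> (rinner \<xi> \<eta>) x a = sadj r D (tau_r \<alpha> r \<xi>) x (tau_r \<alpha> r \<eta> x a)"
        using part_c[OF lb aD[unfolded Deq], of \<xi>] H unfolding Deq by simp
    qed
  qed
  have Dd: "\<forall>f. \<forall>\<xi>\<in>EY L \<alpha> Y. continuous_on UNIV f \<longrightarrow>
        sect_eq Z D (tau_r \<alpha> r (lact \<alpha> f \<xi>)) (scomp (pi_r \<alpha> f) (tau_r \<alpha> r \<xi>)) \<and>
        sect_eq Z D (tau_r \<alpha> r (lact \<alpha> f \<xi>)) (scomp (tau_r \<alpha> r \<xi>) (pi_r \<alpha> (f \<circ> \<alpha>)))"
    unfolding sect_eq_def by (intro ballI allI impI conjI part_d1 part_d2)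
  have E: "\<forall>\<xi>\<in>EY L \<alpha> Y. \<forall>\<eta>\<in>EY L \<alpha> Y.
        sect_eq Z D (pi_r \<alpha> (linner \<alpha> \<xi> \<eta>)) (scomp (tau_r \<alpha> r \<xi>) (sadj r D (tau_r \<alpha> r \<eta>)))"
  proof (intro ballI)
    fix \<xi> \<eta> assume \<xi>: "\<xi> \<in> EY L \<alpha> Y" and "\<eta> \<in> EY L \<alpha> Y"
    show "sect_eq Z D (pi_r \<alpha> (linner \<alpha> \<xi> \<eta>)) (scomp (tau_r \<alpha> r \<xi>) (sadj r D (tau_r \<alpha> r \<eta>)))"
      unfolding sect_eq_def scomp_def
    proof (intro ballI)
      fix x a assume xZ: "x \<in> Z" and aD: "a \<in> D x"
      have H: "\<xi> (inv \<alpha> x) = (\<lambda>j. 0)"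
        using EY0[OF \<xi>, of "\<beta> x"] ab[of x] xZ ZY invB by auto
      show "pi_r \<alpha> (linner \<alpha> \<xi> \<eta>) x a = tau_r \<alpha> r \<xi> x (sadj r D (tau_r \<alpha> r \<eta>) x a)"
        using part_e[OF lb EYL[OF \<xi>] aD[unfolded Deq] invA H] unfolding Deq by simp
    qed
  qed
  show ?thesis by (rule conjI[OF A1 conjI[OF A2 conjI[OF B1 conjI[OF B2 conjI[OF C conjI[OF Dd E]]]]]])
qed

end
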